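(* Let $G$ be a non-amenable group with $G=H\times K$ for some groups $H,K$. Then $$\min\{\mathcal{T}(H),\mathcal{T}(K)\}\leq 2(\mathcal{T}(G)-1)^2.$$
   Context: A group $G$ admits a paradoxical decomposition if there exist positive integers $m,n$, pairwise disjoint subsets $P_1,\ldots,P_m,Q_1,\ldots,Q_n$ of $G$ and elements $g_1,\ldots,g_m,h_1,\ldots,h_n\in G$ such that $G=\bigcup_{i=1}^m P_ig_i=\bigcup_{j=1}^n Q_jh_j$; this happens if and only if $G$ is non-amenable. For a non-amenable group $G$, the Tarski number $\mathcal{T}(G)$ is the minimal value of $m+n$ over all paradoxical decompositions of $G$; for an amenable group the Tarski number is taken to be $\infty$. *)

theory Defs
  imports "HOL-Algebra.Algebra" "HOL-Library.Extended_Nat"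
begin

definition paradoxical_decomp :: "('a, 'b) monoid_scheme \<Rightarrow> nat \<Rightarrow> nat \<Rightarrow> bool" where
  "paradoxical_decomp G m n \<longleftrightarrow> 0 < m \<and> 0 < n \<and>
     (\<exists>P Q g h.
        (\<forall>i<m. P i \<subseteq> carrier G \<and> g i \<in> carrier G) \<and>
        (\<forall>j<n. Q j \<subseteq> carrier G \<and> h j \<in> carrier G) \<and>
        (\<forall>i<m. \<forall>i'<m. i \<noteq> i' \<longrightarrow> P i \<inter> P i' = {}) \<and>
        (\<forall>j<n. \<forall>j'<n. j \<noteq> j' \<longrightarrow> Q j \<inter> Q j' = {}) \<and>
        (\<forall>i<m. \<forall>j<n. P i \<inter> Q j = {}) \<and>
        (\<Union>i<m. P i #>\<^bsub>G\<^esub> g i) = carrier G \<and>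
        (\<Union>j<n. Q j #>\<^bsub>G\<^esub> h j) = carrier G)"

text \<open>Non-amenability, via Tarski's characterisation given in the context.\<close>
definition nonamenable :: "('a, 'b) monoid_scheme \<Rightarrow> bool" where
  "nonamenable G \<longleftrightarrow> (\<exists>m n. paradoxical_decomp G m n)"

text \<open>Tarski number; the infimum of the empty set is \<infinity> (amenable case).\<close>
definition tarski_number :: "('a, 'b) monoid_scheme \<Rightarrow> enat" where
  "tarski_number G = (INF p \<in> {(m, n). paradoxical_decomp G m n}. enat (fst p + snd p))"

end

theory Submission
  imports Defs
begin

lemma hall_inf:
  fixes Vx :: "'l set" and N :: "'l \<Rightarrow> 'r set"
  assumes fin: "\<And>x. x \<in> Vx \<Longrightarrow> finite (N x)"
  and hall: "\<And>L. L \<subseteq> Vx \<Longrightarrow> finite L \<Longrightarrow> card L \<le> card (\<Union>(N ` L))"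
  shows "\<exists>f. inj_on f Vx \<and> (\<forall>x\<in>Vx. f x \<in> N x)"
proof -
  define Ed where "Ed = Sigma Vx N"
  define HP where "HP (E::('l \<times> 'r) set) \<longleftrightarrow> (\<forall>L\<subseteq>Vx. finite L \<longrightarrow> card L \<le> card (E `` L))" for E
  have EdL: "Ed `` L = \<Union>(N ` L)" if "L \<subseteq> Vx" for L using that by (auto simp: Ed_def)
  have finimg: "finite (E `` L)" if "E \<subseteq> Ed" "L \<subseteq> Vx" "finite L" for E L
  proof -
    have "finite (\<Union>(N ` L))" using that fin by auto
    moreover have "E `` L \<subseteq> \<Union>(N ` L)" using that by (auto simp: Ed_def)
    ultimately show ?thesis by (rule rev_finite_subset)
  qed
  define A where "A = {D. D \<subseteq> Ed \<and> HP (Ed - D)}"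
  have "\<forall>C\<in>chains A. \<Union>C \<in> A"
  proof
    fix C assume C: "C \<in> chains A"
    show "\<Union>C \<in> A"
    proof (cases "C = {}")
      case True
      then show ?thesis using hall EdL by (auto simp: A_def HP_def)
    next
      case False
      have sub: "\<Union>C \<subseteq> Ed" using C by (auto simp: chains_def A_def)
      have "HP (Ed - \<Union>C)" unfolding HP_def
      proof (intro allI impI)
        fix L assume L: "L \<subseteq> Vx" "finite L"
        define Z where "Z = Sigma L N"
        have fZ: "finite Z" using L fin unfolding Z_def by (auto intro!: finite_SigmaI)
        have "finite (\<Union>C \<inter> Z)" using fZ by auto
        then obtain B where B: "B \<in> C" "\<Union>C \<inter> Z \<subseteq> B"
          using finite_subset_Union_chain[of "\<Union>C \<inter> Z" C A] C False
          by (auto simp: chains_alt_def)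
        have BA: "B \<in> A" using B C by (auto simp: chains_def)
        have eq: "(Ed - \<Union>C) `` L = (Ed - B) `` L"
          using B L by (auto simp: Z_def Ed_def)
        show "card L \<le> card ((Ed - \<Union>C) `` L)"
          using BA L unfolding eq by (auto simp: A_def HP_def)
      qed
      then show ?thesis using sub by (auto simp: A_def)
    qed
  qed
  from Zorn_Lemma[OF this] obtain M where M: "M \<in> A" and Mmax0: "\<forall>Y\<in>A. M \<subseteq> Y \<longrightarrow> Y = M"
    by (elim bexE)
  have Mmax: "Y = M" if "Y \<in> A" "M \<subseteq> Y" for Y using Mmax0 that by simp
  define E where "E = Ed - M"
  have HE: "HP E" and EEd: "E \<subseteq> Ed" using M by (auto simp: A_def E_def)
  have ex1: "\<exists>y. (x, y) \<in> E" if x: "x \<in> Vx" for x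
  proof -
    have "{x} \<subseteq> Vx" "finite {x}" using x by auto
    then have "card {x} \<le> card (E `` {x})" using HE unfolding HP_def by blast
    then have "E `` {x} \<noteq> {}" by auto
    then show ?thesis by auto
  qed
  have uniq: "y1 = y2" if x: "x \<in> Vx" and y: "(x, y1) \<in> E" "(x, y2) \<in> E" for x y1 y2
  proof (rule ccontr)
    assume ne: "y1 \<noteq> y2"
    have notHP: "\<exists>L\<subseteq>Vx. finite L \<and> x \<in> L \<and> card ((E - {(x,y)}) `` L) < card L"
      if yy: "(x, y) \<in> E" for y
    proof -
      have "M \<union> {(x,y)} \<notin> A"
      proof
        assume "M \<union> {(x,y)} \<in> A"
        then have "M \<union> {(x,y)} = M" using Mmax by blast
        then show False using yy by (auto simp: E_def)
      qed
      moreover have "M \<union> {(x,y)} \<subseteq> Ed" using M yy EEd by (auto simp: A_def)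
      ultimately have "\<not> HP (Ed - (M \<union> {(x,y)}))" by (auto simp: A_def)
      moreover have "Ed - (M \<union> {(x,y)}) = E - {(x,y)}" by (auto simp: E_def)
      ultimately have "\<not> HP (E - {(x,y)})" by simp
      then obtain L where L: "L \<subseteq> Vx" "finite L" "card ((E - {(x,y)}) `` L) < card L"
        unfolding HP_def by (auto simp: not_le)
      have "x \<in> L"
      proof (rule ccontr)
        assume "x \<notin> L"
        then have "(E - {(x,y)}) `` L = E `` L" by auto
        moreover have "card L \<le> card (E `` L)" using L HE unfolding HP_def by blast
        ultimately show False using L(3) by simp
      qed
      then show ?thesis using L by blast
    qed
    obtain L1 where L1: "L1 \<subseteq> Vx" "finite L1" "x \<in> L1" "card ((E - {(x,y1)}) `` L1) < card L1"
      using notHP[OF y(1)] by blast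
    obtain L2 where L2: "L2 \<subseteq> Vx" "finite L2" "x \<in> L2" "card ((E - {(x,y2)}) `` L2) < card L2"
      using notHP[OF y(2)] by blast
    define U1 where "U1 = (E - {(x,y1)}) `` L1"
    define U2 where "U2 = (E - {(x,y2)}) `` L2"
    have fU1: "finite U1" unfolding U1_def using finimg[of "E - {(x,y1)}" L1] EEd L1 by auto
    have fU2: "finite U2" unfolding U2_def using finimg[of "E - {(x,y2)}" L2] EEd L2 by auto
    have s1: "E `` (L1 \<union> L2) \<subseteq> U1 \<union> U2"
      using ne L1 L2 by (auto simp: U1_def U2_def)
    have s2: "E `` (L1 \<inter> L2 - {x}) \<subseteq> U1 \<inter> U2"
      by (auto simp: U1_def U2_def)
    have c1: "card (L1 \<union> L2) \<le> card (U1 \<union> U2)"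
    proof -
      have "L1 \<union> L2 \<subseteq> Vx" "finite (L1 \<union> L2)" using L1 L2 by auto
      then have "card (L1 \<union> L2) \<le> card (E `` (L1 \<union> L2))" using HE unfolding HP_def by blast
      also have "\<dots> \<le> card (U1 \<union> U2)" using s1 fU1 fU2 by (intro card_mono) auto
      finally show ?thesis .
    qed
    have c2: "card (L1 \<inter> L2 - {x}) \<le> card (U1 \<inter> U2)"
    proof -
      have "L1 \<inter> L2 - {x} \<subseteq> Vx" "finite (L1 \<inter> L2 - {x})" using L1 L2 by auto
      then have "card (L1 \<inter> L2 - {x}) \<le> card (E `` (L1 \<inter> L2 - {x}))" using HE unfolding HP_def by blast
      also have "\<dots> \<le> card (U1 \<inter> U2)" using s2 fU1 fU2 by (intro card_mono) auto
      finally show ?thesis .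
    qed
    have c3: "card (L1 \<inter> L2 - {x}) + 1 = card (L1 \<inter> L2)"
      using L1 L2 by (metis Int_iff card_Suc_Diff1 finite_Int Suc_eq_plus1)
    have "card U1 + card U2 = card (U1 \<union> U2) + card (U1 \<inter> U2)" using fU1 fU2 card_Un_Int by blast
    moreover have "card L1 + card L2 = card (L1 \<union> L2) + card (L1 \<inter> L2)" using L1 L2 card_Un_Int by blast
    ultimately show False using c1 c2 c3 L1(4) L2(4) unfolding U1_def U2_def by linarith
  qed
  define f where "f x = (SOME y. (x, y) \<in> E)" for x
  have fE: "(x, f x) \<in> E" if "x \<in> Vx" for x using ex1[OF that] unfolding f_def by (rule someI_ex)
  have "inj_on f Vx"
  proof (rule inj_onI)
    fix a b assume ab: "a \<in> Vx" "b \<in> Vx" "f a = f b"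
    show "a = b"
    proof (rule ccontr)
      assume "a \<noteq> b"
      have "E `` {a, b} = {f a}"
      proof
        show "E `` {a, b} \<subseteq> {f a}" using uniq fE ab by fastforce
        show "{f a} \<subseteq> E `` {a, b}" using fE ab by auto
      qed
      moreover have "card {a, b} \<le> card (E `` {a, b})" using HE ab unfolding HP_def by auto
      ultimately show False using \<open>a \<noteq> b\<close> by simp
    qed
  qed
  moreover have "\<forall>x\<in>Vx. f x \<in> N x" using fE EEd by (auto simp: Ed_def)
  ultimately show ?thesis by blast
qed

lemma set_mult_image:
  "A <#>\<^bsub>G\<^esub> B = (\<lambda>(x,y). x \<otimes>\<^bsub>G\<^esub> y) ` (A \<times> B)"
  by (auto simp: set_mult_def)

lemma finite_set_mult: "finite A \<Longrightarrow> finite B \<Longrightarrow> finite (A <#>\<^bsub>G\<^esub> B)"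
  by (simp add: set_mult_image)

lemma card_set_mult_le: "finite A \<Longrightarrow> finite B \<Longrightarrow> card (A <#>\<^bsub>G\<^esub> B) \<le> card A * card B"
  unfolding set_mult_image by (metis card_cartesian_product card_image_le finite_cartesian_product)

lemma (in group) expansion_decomp:
  assumes R: "R \<subseteq> carrier G" "finite R"
    and exp: "\<And>A. A \<subseteq> carrier G \<Longrightarrow> finite A \<Longrightarrow> 2 * card A \<le> card (A <#> R)"
  shows "paradoxical_decomp G (card R) (card R)"
proof -
  define Vx where "Vx = carrier G \<times> (UNIV :: bool set)"
  define N where "N = (\<lambda>(x::'a, b::bool). (\<lambda>r. x \<otimes> r) ` R)"
  have "\<exists>f. inj_on f Vx \<and> (\<forall>x\<in>Vx. f x \<in> N x)"
  proof (rule hall_inf)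
    show "finite (N x)" if "x \<in> Vx" for x using R by (auto simp: N_def split: prod.splits)
  next
    fix L assume L: "L \<subseteq> Vx" "finite L"
    define A where "A = fst ` L"
    have A: "A \<subseteq> carrier G" "finite A" using L by (auto simp: A_def Vx_def)
    have "card L \<le> card (A \<times> (UNIV :: bool set))"
      using L A by (intro card_mono) (auto simp: A_def intro: rev_image_eqI)
    also have "\<dots> = 2 * card A" by (simp add: card_cartesian_product)
    also have "\<dots> \<le> card (A <#> R)" using exp A by blast
    also have "A <#> R = \<Union>(N ` L)"
      by (auto simp: A_def N_def set_mult_def) (metis fst_conv)
    finally show "card L \<le> card (\<Union>(N ` L))" .
  qed
  then obtain f where inj: "inj_on f Vx" and fN: "\<And>x. x \<in> Vx \<Longrightarrow> f x \<in> N x" by blast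
  obtain r where r: "bij_betw r {0..<card R} R" using ex_bij_betw_nat_finite R(2) by blast
  define k where "k = card R"
  have rin: "r i \<in> R" if "i < k" for i using r that unfolding k_def bij_betw_def by auto
  have rinj: "r i = r i' \<Longrightarrow> i < k \<Longrightarrow> i' < k \<Longrightarrow> i = i'" for i i'
    using r unfolding k_def bij_betw_def inj_on_def by auto
  have rsurj: "\<exists>i<k. r i = s" if "s \<in> R" for s
    using r that unfolding k_def bij_betw_def by (metis atLeastLessThan_iff imageE)
  have fX: "\<exists>i<k. f (x, b) = x \<otimes> r i" if "x \<in> carrier G" for x b
  proof -
    have "f (x, b) \<in> N (x, b)" using fN that by (auto simp: Vx_def)
    then obtain s where "s \<in> R" "f (x, b) = x \<otimes> s" by (auto simp: N_def)
    then show ?thesis using rsurj by blast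
  qed
  have "{\<one>} <#> R = R"
  proof (intro equalityI subsetI)
    fix x assume "x \<in> {\<one>} <#> R" then show "x \<in> R" using R by (auto simp: set_mult_def)
  next
    fix x assume x: "x \<in> R"
    show "x \<in> {\<one>} <#> R" unfolding set_mult_def
    proof (rule UN_I[OF singletonI], rule UN_I[OF x])
      show "x \<in> {\<one> \<otimes> x}" using x R by auto
    qed
  qed
  then have "2 * card {\<one>} \<le> card R" using exp[of "{\<one>}"] by simp
  then have kpos: "0 < k" by (simp add: k_def)
  define P where "P = (\<lambda>i. {f (x, True) | x. x \<in> carrier G \<and> f (x, True) = x \<otimes> r i})"
  define Q where "Q = (\<lambda>i. {f (x, False) | x. x \<in> carrier G \<and> f (x, False) = x \<otimes> r i})"
  define g where "g i = inv (r i)" for i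
  have rc: "r i \<in> carrier G" if "i < k" for i using rin that R by auto
  have key: "(\<Union>i<k. S i #> g i) = carrier G"
    if S: "S = (\<lambda>i. {f (x, b) | x. x \<in> carrier G \<and> f (x, b) = x \<otimes> r i})" for S b
  proof
    show "(\<Union>i<k. S i #> g i) \<subseteq> carrier G"
      using rc by (auto simp: S r_coset_def g_def m_assoc)
    show "carrier G \<subseteq> (\<Union>i<k. S i #> g i)"
    proof
      fix x assume x: "x \<in> carrier G"
      obtain i where i: "i < k" "f (x, b) = x \<otimes> r i" using fX[OF x] by blast
      have "x = f (x, b) \<otimes> g i" using i x rc[OF i(1)] by (simp add: g_def m_assoc)
      moreover have "f (x, b) \<in> S i" using i x by (auto simp: S intro!: exI[of _ x])
      ultimately show "x \<in> (\<Union>i<k. S i #> g i)" using i by (auto simp: r_coset_def)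
    qed
  qed
  have disj: "S i \<inter> S' i' = {}"
    if S: "S = (\<lambda>i. {f (x, b) | x. x \<in> carrier G \<and> f (x, b) = x \<otimes> r i})"
    and S': "S' = (\<lambda>i. {f (x, b') | x. x \<in> carrier G \<and> f (x, b') = x \<otimes> r i})"
    and ne: "b \<noteq> b' \<or> i \<noteq> i'" and i: "i < k" "i' < k" for S S' b b' i i'
  proof (rule ccontr)
    assume "S i \<inter> S' i' \<noteq> {}"
    then obtain x x' where x: "x \<in> carrier G" "x' \<in> carrier G" "f (x, b) = f (x', b')"
       "f (x, b) = x \<otimes> r i" "f (x', b') = x' \<otimes> r i'" by (auto simp: S S')
    have "(x, b) = (x', b')" using inj x unfolding inj_on_def Vx_def by blast
    then have "b = b'" "x = x'" by auto
    then have "r i = r i'" using x rc i by simp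
    then have "i = i'" using rinj i by blast
    then show False using ne \<open>b = b'\<close> by blast
  qed
  show ?thesis unfolding paradoxical_decomp_def k_def[symmetric]
  proof (intro conjI kpos, rule exI[of _ P], rule exI[of _ Q], rule exI[of _ g], rule exI[of _ g], intro conjI)
    show "\<forall>i<k. P i \<subseteq> carrier G \<and> g i \<in> carrier G" using rc by (auto simp: P_def g_def)
    show "\<forall>j<k. Q j \<subseteq> carrier G \<and> g j \<in> carrier G" using rc by (auto simp: Q_def g_def)
    show "\<forall>i<k. \<forall>i'<k. i \<noteq> i' \<longrightarrow> P i \<inter> P i' = {}"
      by (intro allI impI, rule disj[OF P_def P_def]) auto
    show "\<forall>i<k. \<forall>i'<k. i \<noteq> i' \<longrightarrow> Q i \<inter> Q i' = {}"
      by (intro allI impI, rule disj[OF Q_def Q_def]) auto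
    show "\<forall>i<k. \<forall>j<k. P i \<inter> Q j = {}"
      by (intro allI impI, rule disj[OF P_def Q_def]) auto
    show "(\<Union>i<k. P i #> g i) = carrier G" by (rule key[OF P_def])
    show "(\<Union>i<k. Q i #> g i) = carrier G" by (rule key[OF Q_def])
  qed
qed



lemma Inf_enat_in: "(I :: enat set) \<noteq> {} \<Longrightarrow> Inf I \<in> I"
  unfolding Inf_enat_def by (simp add: LeastI_ex ex_in_conv[symmetric] del: ex_in_conv)
    (metis LeastI ex_in_conv)

lemma tarski_attained:
  assumes "nonamenable G"
  shows "\<exists>m n. paradoxical_decomp G m n \<and> tarski_number G = enat (m + n)"
proof -
  define I where "I = (\<lambda>p. enat (fst p + snd p)) ` {(m, n). paradoxical_decomp G m n}"
  have "I \<noteq> {}" using assms by (auto simp: I_def nonamenable_def)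
  then have "Inf I \<in> I" by (rule Inf_enat_in)
  then obtain m n where mn: "paradoxical_decomp G m n" "Inf I = enat (m + n)" by (auto simp: I_def)
  have "tarski_number G = Inf I" by (simp add: tarski_number_def I_def)
  then show ?thesis using mn by (intro exI[of _ m] exI[of _ n]) simp
qed

lemma tarski_le: "paradoxical_decomp G m n \<Longrightarrow> tarski_number G \<le> enat (m + n)"
  unfolding tarski_number_def by (rule INF_lower2[of "(m, n)"]) auto

lemma enat_bound: "2 * (enat t - 1)^2 = enat (2 * (t - 1)^2)"
  by (simp add: one_enat_def power2_eq_square numeral_eq_enat)

lemma arith_aux:
  fixes a b p q c :: nat
  assumes "p^2 < 2*a^2" "q^2 < 2*b^2" "2*(a*b) \<le> c" "c \<le> p*q"
  shows False
proof -
  have "(2*(a*b))^2 \<le> (p*q)^2" using assms(3,4) by (intro power_mono) auto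
  also have "\<dots> = p^2 * q^2" by (simp add: power_mult_distrib)
  also have "\<dots> < (2*a^2) * (2*b^2)"
  proof (rule mult_strict_mono)
    show "0 < 2 * a^2" using assms(1) by (cases "a = 0") auto
  qed (use assms(1,2) in auto)
  also have "\<dots> = (2*(a*b))^2" by (simp add: power_mult_distrib)
  finally show False by simp
qed

lemma (in group) square_step:
  assumes R: "R \<subseteq> carrier G" "finite R"
    and sq: "\<And>A. A \<subseteq> carrier G \<Longrightarrow> finite A \<Longrightarrow> 2 * card A ^ 2 \<le> card (A <#> R) ^ 2"
    and A: "A \<subseteq> carrier G" "finite A"
  shows "2 * card A \<le> card (A <#> (R <#> R))"
proof -
  have eq: "A <#> (R <#> R) = (A <#> R) <#> R" using set_mult_assoc A R by simp
  have AR: "A <#> R \<subseteq> carrier G" "finite (A <#> R)"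
    using set_mult_closed A R finite_set_mult by auto
  have "(2 * card A)^2 = 2 * (2 * card A ^ 2)" by (simp add: power2_eq_square)
  also have "\<dots> \<le> 2 * card (A <#> R) ^ 2" using sq[OF A] by simp
  also have "\<dots> \<le> card (A <#> (R <#> R)) ^ 2" unfolding eq using sq[OF AR] .
  finally show ?thesis by (rule power2_le_imp_le) simp
qed

lemma (in group) decomp_expansion:
  assumes pd: "paradoxical_decomp G m n"
  shows "\<exists>S. S \<subseteq> carrier G \<and> finite S \<and> card S \<le> m + n - 1 \<and>
           (\<forall>F. F \<subseteq> carrier G \<longrightarrow> finite F \<longrightarrow> 2 * card F \<le> card (F <#> S))"
proof -
  obtain P Q g h where mpos: "0 < m" and npos: "0 < n"
    and Pc: "\<forall>i<m. P i \<subseteq> carrier G \<and> g i \<in> carrier G"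
    and Qc: "\<forall>j<n. Q j \<subseteq> carrier G \<and> h j \<in> carrier G"
    and PQ: "\<forall>i<m. \<forall>j<n. P i \<inter> Q j = {}"
    and PP: "\<forall>i<m. \<forall>i'<m. i \<noteq> i' \<longrightarrow> P i \<inter> P i' = {}"
    and QQ: "\<forall>j<n. \<forall>j'<n. j \<noteq> j' \<longrightarrow> Q j \<inter> Q j' = {}"
    and Pu: "(\<Union>i<m. P i #> g i) = carrier G"
    and Qu: "(\<Union>j<n. Q j #> h j) = carrier G"
    using pd unfolding paradoxical_decomp_def by (elim conjE exE) (rule that; assumption)
  have exP: "\<exists>i<m. x \<otimes> inv (g i) \<in> P i" if x: "x \<in> carrier G" for x
  proof -
    from x Pu have "x \<in> (\<Union>i<m. P i #> g i)" by simp
    then obtain i where i0: "i < m" "x \<in> P i #> g i" by blast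
    then obtain p where p: "p \<in> P i" "x = p \<otimes> g i" unfolding r_coset_def by blast
    note i = i0(1) p
    have "p \<in> carrier G" "g i \<in> carrier G" using Pc i by auto
    then have "x \<otimes> inv (g i) = p" using i by (simp add: m_assoc)
    then show ?thesis using i by auto
  qed
  have exQ: "\<exists>j<n. x \<otimes> inv (h j) \<in> Q j" if x: "x \<in> carrier G" for x
  proof -
    from x Qu have "x \<in> (\<Union>j<n. Q j #> h j)" by simp
    then obtain j where j0: "j < n" "x \<in> Q j #> h j" by blast
    then obtain q where q: "q \<in> Q j" "x = q \<otimes> h j" unfolding r_coset_def by blast
    note j = j0(1) q
    have "q \<in> carrier G" "h j \<in> carrier G" using Qc j by auto
    then have "x \<otimes> inv (h j) = q" using j by (simp add: m_assoc)
    then show ?thesis using j by auto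
  qed
  have g0: "g 0 \<in> carrier G" and h0: "h 0 \<in> carrier G" using Pc Qc mpos npos by auto
  define c where "c = inv (g 0) \<otimes> h 0"
  have cc: "c \<in> carrier G" using g0 h0 by (simp add: c_def)
  define ia where "ia x = (SOME i. i < m \<and> x \<otimes> inv (g i) \<in> P i)" for x
  define jb where "jb x = (SOME j. j < n \<and> (x \<otimes> c) \<otimes> inv (h j) \<in> Q j)" for x
  define a where "a x = x \<otimes> inv (g (ia x))" for x
  define b where "b x = (x \<otimes> c) \<otimes> inv (h (jb x))" for x
  have ia: "ia x < m \<and> a x \<in> P (ia x)" if "x \<in> carrier G" for x
    unfolding a_def ia_def using exP[OF that] by (rule someI_ex)
  have jb: "jb x < n \<and> b x \<in> Q (jb x)" if "x \<in> carrier G" for x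
  proof -
    have "x \<otimes> c \<in> carrier G" using that cc by simp
    from exQ[OF this] show ?thesis unfolding b_def jb_def by (rule someI_ex)
  qed
  have inja: "inj_on a (carrier G)"
  proof (rule inj_onI)
    fix x y assume xy: "x \<in> carrier G" "y \<in> carrier G" "a x = a y"
    have "ia x = ia y"
    proof (rule ccontr)
      assume "ia x \<noteq> ia y"
      then have "P (ia x) \<inter> P (ia y) = {}" using PP ia xy by blast
      then show False using ia[OF xy(1)] ia[OF xy(2)] xy(3) by auto
    qed
    moreover have "g (ia x) \<in> carrier G" using Pc ia xy by blast
    ultimately show "x = y" using xy unfolding a_def by simp
  qed
  have injb: "inj_on b (carrier G)"
  proof (rule inj_onI)
    fix x y assume xy: "x \<in> carrier G" "y \<in> carrier G" "b x = b y"
    have "jb x = jb y"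
    proof (rule ccontr)
      assume "jb x \<noteq> jb y"
      then have "Q (jb x) \<inter> Q (jb y) = {}" using QQ jb xy by blast
      then show False using jb[OF xy(1)] jb[OF xy(2)] xy(3) by auto
    qed
    moreover have "h (jb x) \<in> carrier G" using Qc jb xy by blast
    ultimately have "x \<otimes> c = y \<otimes> c" using xy cc unfolding b_def by simp
    then show "x = y" using xy cc by simp
  qed
  have abdisj: "a x \<noteq> b y" if "x \<in> carrier G" "y \<in> carrier G" for x y
  proof
    assume "a x = b y"
    moreover have "P (ia x) \<inter> Q (jb y) = {}" using PQ ia jb that by blast
    ultimately show False using ia[OF that(1)] jb[OF that(2)] by auto
  qed
  define U where "U = (\<lambda>i. inv (g i)) ` {..<m}"
  define V where "V = (\<lambda>j. c \<otimes> inv (h j)) ` {..<n}"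
  define S where "S = U \<union> V"
  have Sc: "S \<subseteq> carrier G" using Pc Qc cc by (auto simp: S_def U_def V_def)
  have fS: "finite S" by (simp add: S_def U_def V_def)
  have fU: "finite U" and fV: "finite V" unfolding U_def V_def by auto
  have "inv (g 0) \<in> U \<inter> V"
  proof -
    have "c \<otimes> inv (h 0) = inv (g 0)" using g0 h0 by (simp add: c_def m_assoc)
    then show ?thesis using mpos npos unfolding U_def V_def by force
  qed
  then have "1 \<le> card (U \<inter> V)" by (metis One_nat_def Suc_leI card_gt_0_iff empty_iff finite_Int finite_imageI finite_lessThan U_def)
  moreover have "card (U \<union> V) + card (U \<inter> V) = card U + card V"
    using card_Un_Int[OF fU fV] by linarith
  moreover have "card U \<le> m" "card V \<le> n" unfolding U_def V_def
    by (metis card_image_le card_lessThan finite_lessThan)+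
  ultimately have cardS: "card S \<le> m + n - 1" unfolding S_def by linarith
  have "2 * card F \<le> card (F <#> S)" if F: "F \<subseteq> carrier G" "finite F" for F
  proof -
    have "a ` F \<union> b ` F \<subseteq> F <#> S"
    proof
      fix z assume "z \<in> a ` F \<union> b ` F"
      then show "z \<in> F <#> S"
      proof
        assume "z \<in> a ` F"
        then obtain x where x: "x \<in> F" "z = a x" by blast
        have "inv (g (ia x)) \<in> S" using ia[of x] x F by (auto simp: S_def U_def)
        then show ?thesis using x unfolding a_def set_mult_def by blast
      next
        assume "z \<in> b ` F"
        then obtain x where x: "x \<in> F" "z = b x" by blast
        have hc: "h (jb x) \<in> carrier G" using Qc jb[of x] x F by blast
        have "z = x \<otimes> (c \<otimes> inv (h (jb x)))" using x F hc cc by (simp add: b_def m_assoc subsetD)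
        moreover have "c \<otimes> inv (h (jb x)) \<in> S" using jb[of x] x F by (auto simp: S_def V_def)
        ultimately show ?thesis using x unfolding set_mult_def by blast
      qed
    qed
    moreover have "finite (F <#> S)" using F fS by (simp add: finite_set_mult)
    ultimately have "card (a ` F \<union> b ` F) \<le> card (F <#> S)" by (simp add: card_mono)
    moreover have "card (a ` F \<union> b ` F) = card (a ` F) + card (b ` F)"
      using F abdisj by (intro card_Un_disjoint) auto
    moreover have "card (a ` F) = card F" "card (b ` F) = card F"
      using inj_on_subset[OF inja F(1)] inj_on_subset[OF injb F(1)] by (simp_all add: card_image)
    ultimately show ?thesis by simp
  qed
  then show ?thesis using Sc fS cardS by blast
qed



lemma product_split:
  fixes G :: "('a, 'c) monoid_scheme" and H :: "('b, 'd) monoid_scheme"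
    and K :: "('e, 'f) monoid_scheme"
  assumes grpG: "group G" and phi: "\<phi> \<in> iso G (H \<times>\<times> K)"
    and S: "S \<subseteq> carrier G" "finite S"
    and exp: "\<And>F. F \<subseteq> carrier G \<Longrightarrow> finite F \<Longrightarrow> 2 * card F \<le> card (F <#>\<^bsub>G\<^esub> S)"
  shows "(\<forall>A. A \<subseteq> carrier H \<longrightarrow> finite A \<longrightarrow> 2 * card A ^ 2 \<le> card (A <#>\<^bsub>H\<^esub> (fst ` \<phi> ` S)) ^ 2)
       \<or> (\<forall>B. B \<subseteq> carrier K \<longrightarrow> finite B \<longrightarrow> 2 * card B ^ 2 \<le> card (B <#>\<^bsub>K\<^esub> (snd ` \<phi> ` S)) ^ 2)"
proof (rule ccontr)
  assume "\<not> ?thesis"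
  then obtain A B where A: "A \<subseteq> carrier H" "finite A" "card (A <#>\<^bsub>H\<^esub> (fst ` \<phi> ` S)) ^ 2 < 2 * card A ^ 2"
    and B: "B \<subseteq> carrier K" "finite B" "card (B <#>\<^bsub>K\<^esub> (snd ` \<phi> ` S)) ^ 2 < 2 * card B ^ 2"
    by (auto simp: not_le)
  have hom: "\<phi> \<in> hom G (H \<times>\<times> K)" and bij: "bij_betw \<phi> (carrier G) (carrier H \<times> carrier K)"
    using phi by (auto simp: iso_def)
  have inj: "inj_on \<phi> (carrier G)" using bij by (simp add: bij_betw_def)
  have img: "\<phi> ` carrier G = carrier H \<times> carrier K" using bij by (simp add: bij_betw_def)
  define F where "F = {x \<in> carrier G. \<phi> x \<in> A \<times> B}"
  have Fc: "F \<subseteq> carrier G" by (auto simp: F_def)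
  have phiF: "\<phi> ` F = A \<times> B"
  proof
    show "\<phi> ` F \<subseteq> A \<times> B" by (auto simp: F_def)
    show "A \<times> B \<subseteq> \<phi> ` F"
    proof
      fix z assume z: "z \<in> A \<times> B"
      then have "z \<in> \<phi> ` carrier G" using img A B by auto
      then obtain x where "x \<in> carrier G" "z = \<phi> x" by blast
      then show "z \<in> \<phi> ` F" using z by (auto simp: F_def)
    qed
  qed
  have injF: "inj_on \<phi> F" using inj_on_subset[OF inj Fc] .
  have fF: "finite F" using phiF A B injF by (metis finite_SigmaI finite_imageD)
  have cF: "card F = card A * card B" using phiF injF card_image card_cartesian_product by metis
  define SH where "SH = fst ` \<phi> ` S"
  define SK where "SK = snd ` \<phi> ` S"
  have FSc: "F <#>\<^bsub>G\<^esub> S \<subseteq> carrier G"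
    using monoid.set_mult_closed[OF group.is_monoid[OF grpG] Fc S(1)] .
  have sub: "\<phi> ` (F <#>\<^bsub>G\<^esub> S) \<subseteq> (A <#>\<^bsub>H\<^esub> SH) \<times> (B <#>\<^bsub>K\<^esub> SK)"
  proof
    fix z assume "z \<in> \<phi> ` (F <#>\<^bsub>G\<^esub> S)"
    then obtain x s where xs: "x \<in> F" "s \<in> S" "z = \<phi> (x \<otimes>\<^bsub>G\<^esub> s)"
      by (auto simp: set_mult_def)
    have "z = \<phi> x \<otimes>\<^bsub>H \<times>\<times> K\<^esub> \<phi> s" using xs Fc S hom_mult[OF hom] by auto
    then have z: "z = (fst (\<phi> x) \<otimes>\<^bsub>H\<^esub> fst (\<phi> s), snd (\<phi> x) \<otimes>\<^bsub>K\<^esub> snd (\<phi> s))"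
      by (simp add: mult_DirProd')
    have "fst (\<phi> x) \<in> A" "snd (\<phi> x) \<in> B" using xs by (auto simp: F_def)
    moreover have "fst (\<phi> s) \<in> SH" "snd (\<phi> s) \<in> SK" using xs by (auto simp: SH_def SK_def)
    ultimately show "z \<in> (A <#>\<^bsub>H\<^esub> SH) \<times> (B <#>\<^bsub>K\<^esub> SK)"
      unfolding z set_mult_def by blast
  qed
  have fSH: "finite SH" "finite SK" using S by (auto simp: SH_def SK_def)
  have "card (F <#>\<^bsub>G\<^esub> S) = card (\<phi> ` (F <#>\<^bsub>G\<^esub> S))"
    using inj_on_subset[OF inj FSc] by (simp add: card_image)
  also have "\<dots> \<le> card ((A <#>\<^bsub>H\<^esub> SH) \<times> (B <#>\<^bsub>K\<^esub> SK))"
    using sub A B fSH by (intro card_mono) (auto intro: finite_set_mult)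
  also have "\<dots> = card (A <#>\<^bsub>H\<^esub> SH) * card (B <#>\<^bsub>K\<^esub> SK)" by (rule card_cartesian_product)
  finally have le: "card (F <#>\<^bsub>G\<^esub> S) \<le> card (A <#>\<^bsub>H\<^esub> SH) * card (B <#>\<^bsub>K\<^esub> SK)" .
  have "2 * (card A * card B) \<le> card (F <#>\<^bsub>G\<^esub> S)" using exp[OF Fc fF] cF by simp
  then show False using arith_aux[OF A(3) B(3)] le unfolding SH_def SK_def by blast
qed

theorem theorem1:
  fixes G :: "('a, 'c) monoid_scheme" and H :: "('b, 'd) monoid_scheme"
    and K :: "('e, 'f) monoid_scheme"
  assumes "group G" and "group H" and "group K"
    and "G \<cong> H \<times>\<times> K"
    and "nonamenable G"
  shows "min (tarski_number H) (tarski_number K) \<le> 2 * (tarski_number G - 1) ^ 2"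
proof -
  obtain \<phi> where phi: "\<phi> \<in> iso G (H \<times>\<times> K)" using assms(4) by (auto simp: is_iso_def)
  have hom: "\<phi> \<in> hom G (H \<times>\<times> K)" using phi by (auto simp: iso_def)
  have phic: "\<phi> x \<in> carrier H \<times> carrier K" if "x \<in> carrier G" for x
    using hom that by (auto simp: hom_def)
  obtain m n where pd: "paradoxical_decomp G m n" and T: "tarski_number G = enat (m + n)"
    using tarski_attained[OF assms(5)] by blast
  obtain S where S: "S \<subseteq> carrier G" "finite S" "card S \<le> m + n - 1"
    and exp: "\<And>F. F \<subseteq> carrier G \<Longrightarrow> finite F \<Longrightarrow> 2 * card F \<le> card (F <#>\<^bsub>G\<^esub> S)"
    using group.decomp_expansion[OF assms(1) pd] by blast
  have rhs: "2 * (tarski_number G - 1) ^ 2 = enat (2 * (m + n - 1)^2)"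
    unfolding T by (rule enat_bound)
  have main: "\<exists>k. k \<le> (m + n - 1)^2 \<and> (paradoxical_decomp H k k \<or> paradoxical_decomp K k k)"
  proof -
    have gen: "\<exists>k. k \<le> (m + n - 1)^2 \<and> paradoxical_decomp L k k"
      if grpL: "group L" and SL: "SL \<subseteq> carrier L" "finite SL" "card SL \<le> card S"
      and sq: "\<forall>A. A \<subseteq> carrier L \<longrightarrow> finite A \<longrightarrow> 2 * card A ^ 2 \<le> card (A <#>\<^bsub>L\<^esub> SL) ^ 2"
      for L :: "('g, 'h) monoid_scheme" and SL
    proof -
      define R where "R = SL <#>\<^bsub>L\<^esub> SL"
      have Rc: "R \<subseteq> carrier L"
        unfolding R_def using monoid.set_mult_closed[OF group.is_monoid[OF grpL] SL(1) SL(1)] .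
      have fR: "finite R" unfolding R_def using SL by (simp add: finite_set_mult)
      have "card R \<le> card SL * card SL" unfolding R_def using SL by (simp add: card_set_mult_le)
      also have "\<dots> \<le> card S * card S" using SL(3) by (simp add: mult_mono)
      also have "\<dots> \<le> (m + n - 1) ^ 2" using S(3) by (simp add: power2_eq_square mult_mono)
      finally have cR: "card R \<le> (m + n - 1) ^ 2" .
      have "2 * card A \<le> card (A <#>\<^bsub>L\<^esub> R)" if "A \<subseteq> carrier L" "finite A" for A
        unfolding R_def using group.square_step[OF grpL SL(1,2)] sq that by blast
      then have "paradoxical_decomp L (card R) (card R)"
        using group.expansion_decomp[OF grpL Rc fR] by blast
      then show ?thesis using cR by blast
    qed
    have SHc: "fst ` \<phi> ` S \<subseteq> carrier H" "snd ` \<phi> ` S \<subseteq> carrier K" using S phic by force+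
    have cSH: "card (fst ` \<phi> ` S) \<le> card S" "card (snd ` \<phi> ` S) \<le> card S"
      using S(2) by (meson card_image_le finite_imageI le_trans)+
    from product_split[OF assms(1) phi S(1,2) exp]
    show ?thesis
    proof
      assume "\<forall>A. A \<subseteq> carrier H \<longrightarrow> finite A \<longrightarrow> 2 * card A ^ 2 \<le> card (A <#>\<^bsub>H\<^esub> (fst ` \<phi> ` S)) ^ 2"
      from gen[OF assms(2) SHc(1) _ cSH(1) this] S(2) show ?thesis by auto
    next
      assume "\<forall>B. B \<subseteq> carrier K \<longrightarrow> finite B \<longrightarrow> 2 * card B ^ 2 \<le> card (B <#>\<^bsub>K\<^esub> (snd ` \<phi> ` S)) ^ 2"
      from gen[OF assms(3) SHc(2) _ cSH(2) this] S(2) show ?thesis by auto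
    qed
  qed
  then obtain k where k: "k \<le> (m + n - 1)^2" and kd: "paradoxical_decomp H k k \<or> paradoxical_decomp K k k"
    by blast
  have "min (tarski_number H) (tarski_number K) \<le> enat (k + k)"
    using kd tarski_le[of H k k] tarski_le[of K k k] by (auto simp: min_le_iff_disj)
  also have "\<dots> \<le> enat (2 * (m + n - 1)^2)" using k by simp
  finally show ?thesis unfolding rhs .
qed

end
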